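(* Let $X$ and $Y$ be random variables with mean zero, variance $\sigma^2\in(0,\infty)$, and densities $f_X$ and $f_Y$. Let $X^*$ and $Y^*$ have the zero bias distributions of $X$ and $Y$, with $f_{Y^*}$ the density of $Y^*$. Suppose there is $x_0\ge0$ such that 1. $t\mapsto f_X(t)/f_Y(t)$ is decreasing on $t\ge x_0$; 2. for each $x\ge x_0$ there is a constant $a_Y(x)$ depending only on $x$ such that $f_{Y^*}(t)/f_Y(t)\le a_Y(x)$ for all $t\ge x$. Then $\mathbb{P}(X^*\ge x)\le a_Y(x)\,\mathbb{P}(X\ge x)$ for all $x\ge x_0$.
   Context: Zero bias transform: for $X$ with mean zero and finite variance $\sigma^2$, $X^*$ has the zero bias distribution of $X$ if $\mathbb{E}[Xf(X)]=\sigma^2\mathbb{E}[f'(X^* )]$ for all absolutely continuous $f$ for which the expectations exist; $X^*$ is absolutely continuous with density $f_{X^*}(t)=\sigma^{-2}\mathbb{E}[X\mathbb{I}_{X>t}]$. *)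

theory Defs
  imports "HOL-Probability.Probability"
begin

definition abs_cont_with_deriv :: "(real \<Rightarrow> real) \<Rightarrow> (real \<Rightarrow> real) \<Rightarrow> bool" where
  "abs_cont_with_deriv f g \<longleftrightarrow>
     (\<forall>a b. a \<le> b \<longrightarrow> set_integrable lborel {a..b} g \<and>
                      (LINT t:{a..b}|lborel. g t) = f b - f a)"

definition zero_bias :: "'a measure \<Rightarrow> ('a \<Rightarrow> real) \<Rightarrow> ('a \<Rightarrow> real) \<Rightarrow> bool" where
  "zero_bias M X Xs \<longleftrightarrow>
     Xs \<in> borel_measurable M \<and>
     (\<forall>f g. abs_cont_with_deriv f g \<longrightarrow>
        integrable M (\<lambda>\<omega>. X \<omega> * f (X \<omega>)) \<longrightarrow>
        integrable M (\<lambda>\<omega>. g (Xs \<omega>)) \<longrightarrow>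
        prob_space.expectation M (\<lambda>\<omega>. X \<omega> * f (X \<omega>)) =
          prob_space.variance M X * prob_space.expectation M (\<lambda>\<omega>. g (Xs \<omega>)))"

end

theory Submission
  imports Defs
begin

definition hz :: "(real \<Rightarrow> real) \<Rightarrow> real \<Rightarrow> ennreal" where
  "hz f u = (\<integral>\<^sup>+ s. ennreal (s * f s) * indicator {u..} s \<partial>lborel)"

lemma ind_meas[measurable]: "(\<lambda>p::real\<times>real. indicator {fst p..} (snd p) :: ennreal) \<in> borel_measurable (lborel \<Otimes>\<^sub>M lborel)"
proof -
  have S: "{p \<in> space (lborel \<Otimes>\<^sub>M lborel). fst p \<le> (snd p::real)} \<in> sets (lborel \<Otimes>\<^sub>M lborel)"
    by measurable
  have "(\<lambda>p::real\<times>real. indicator {fst p..} (snd p) :: ennreal) = indicator {p \<in> space (lborel \<Otimes>\<^sub>M lborel). fst p \<le> (snd p::real)}"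
    by (auto simp: indicator_def fun_eq_iff space_pair_measure)
  then show ?thesis using S by simp
qed

lemma hz_meas[measurable]:
  assumes [measurable]: "f \<in> borel_measurable borel"
  shows "hz f \<in> borel_measurable borel"
proof -
  have "(\<lambda>u. \<integral>\<^sup>+ s. ennreal (s * f s) * indicator {u..} s \<partial>lborel) \<in> borel_measurable lborel"
    by (rule lborel.borel_measurable_nn_integral) (simp add: measurable_split_conv)
  then show ?thesis unfolding hz_def by simp
qed

lemma tonelli_tail:
  fixes f :: "real \<Rightarrow> real"
  assumes fm[measurable]: "f \<in> borel_measurable borel" and f0: "\<forall>s. 0 \<le> f s" and t: "0 \<le> t"
  shows "(\<integral>\<^sup>+ s. ennreal (f s) * ennreal (s * max (s - t) 0) \<partial>lborel)
       = (\<integral>\<^sup>+ u. indicator {t..} u * hz f u \<partial>lborel)"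
proof -
  have pt: "ennreal (f s) * ennreal (s * max (s - t) 0)
      = (\<integral>\<^sup>+ u. indicator {t..} u * (ennreal (s * f s) * indicator {u..} s) \<partial>lborel)" for s
  proof -
    have "(\<integral>\<^sup>+ u. indicator {t..} u * (ennreal (s * f s) * indicator {u..} s) \<partial>lborel)
        = (\<integral>\<^sup>+ u. ennreal (s * f s) * indicator {t..s} u \<partial>lborel)"
      by (intro nn_integral_cong) (auto simp: indicator_def)
    also have "\<dots> = ennreal (s * f s) * ennreal (if t \<le> s then s - t else 0)"
      by (simp add: nn_integral_cmult_indicator emeasure_lborel_Icc_eq)
    also have "\<dots> = ennreal (f s) * ennreal (s * max (s - t) 0)"
    proof (cases "t \<le> s")
      case True
      then have "0 \<le> s" using t by simp
      then show ?thesis using True f0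
        by (simp add: ennreal_mult''[symmetric] mult_nonneg_nonneg max_def mult.assoc mult.left_commute)
    next
      case False
      then show ?thesis by simp
    qed
    finally show ?thesis by simp
  qed
  have "(\<integral>\<^sup>+ s. ennreal (f s) * ennreal (s * max (s - t) 0) \<partial>lborel)
      = (\<integral>\<^sup>+ s. \<integral>\<^sup>+ u. indicator {t..} u * (ennreal (s * f s) * indicator {u..} s) \<partial>lborel \<partial>lborel)"
    by (simp add: pt)
  also have "\<dots> = (\<integral>\<^sup>+ u. \<integral>\<^sup>+ s. indicator {t..} u * (ennreal (s * f s) * indicator {u..} s) \<partial>lborel \<partial>lborel)"
    by (rule lborel_pair.Fubini') (simp add: measurable_split_conv)
  also have "\<dots> = (\<integral>\<^sup>+ u. indicator {t..} u * hz f u \<partial>lborel)"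
    unfolding hz_def by (intro nn_integral_cong nn_integral_cmult) measurable
  finally show ?thesis .
qed

lemma integrable_zmax:
  fixes Z :: "'a \<Rightarrow> real" and t :: real
  assumes Zm: "Z \<in> borel_measurable M" and iZ: "integrable M Z"
    and iZ2: "integrable M (\<lambda>\<omega>. (Z \<omega>)\<^sup>2)"
  shows "integrable M (\<lambda>\<omega>. Z \<omega> * max (Z \<omega> - t) 0)"
  proof (rule Bochner_Integration.integrable_bound)
    show "integrable M (\<lambda>\<omega>. (Z \<omega>)\<^sup>2 + \<bar>t\<bar> * \<bar>Z \<omega>\<bar>)"
      using iZ iZ2 by auto
    show "AE x in M. norm (Z x * max (Z x - t) 0) \<le> norm ((Z x)\<^sup>2 + \<bar>t\<bar> * \<bar>Z x\<bar>)"
    proof (intro AE_I2)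
      fix x
      have "max (Z x - t) 0 \<le> \<bar>Z x\<bar> + \<bar>t\<bar>" by auto
      then have "\<bar>Z x\<bar> * max (Z x - t) 0 \<le> \<bar>Z x\<bar> * (\<bar>Z x\<bar> + \<bar>t\<bar>)"
        by (intro mult_left_mono) auto
      then show "norm (Z x * max (Z x - t) 0) \<le> norm ((Z x)\<^sup>2 + \<bar>t\<bar> * \<bar>Z x\<bar>)"
        by (simp add: abs_mult power2_eq_square algebra_simps)
    qed
  qed (use Zm in simp)


lemma zb_tail:
  fixes t :: real and S :: "real set" and Z Zs :: "'a \<Rightarrow> real"
  assumes P: "prob_space M" and zb: "zero_bias M Z Zs" and var: "prob_space.variance M Z = v"
    and v: "0 < v" and Zm: "Z \<in> borel_measurable M" and iZ: "integrable M Z"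
    and iZ2: "integrable M (\<lambda>\<omega>. (Z \<omega>)\<^sup>2)" and S: "S \<in> sets borel"
    and hS: "\<And>a b. a \<le> b \<Longrightarrow> measure lborel ({a..b} \<inter> S) = max (b-t) 0 - max (a-t) 0"
  shows "measure M {\<omega>\<in>space M. Zs \<omega> \<in> S} = prob_space.expectation M (\<lambda>\<omega>. Z \<omega> * max (Z \<omega> - t) 0) / v"
proof -
  interpret prob_space M by (rule P)
  have Zsm[measurable]: "Zs \<in> borel_measurable M" and zbf: "\<forall>f g. abs_cont_with_deriv f g \<longrightarrow>
        integrable M (\<lambda>\<omega>. Z \<omega> * f (Z \<omega>)) \<longrightarrow>
        integrable M (\<lambda>\<omega>. g (Zs \<omega>)) \<longrightarrow>
        expectation (\<lambda>\<omega>. Z \<omega> * f (Z \<omega>)) = variance Z * expectation (\<lambda>\<omega>. g (Zs \<omega>))"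
    using zb unfolding zero_bias_def by auto
  note [measurable] = Zm S
  have ac: "abs_cont_with_deriv (\<lambda>u. max (u-t) 0) (indicator S)"
    unfolding abs_cont_with_deriv_def
  proof (intro allI impI conjI)
    fix a b :: real assume ab: "a \<le> b"
    have eq: "(\<lambda>x. indicator {a..b} x *\<^sub>R indicator S x) = (indicator ({a..b} \<inter> S) :: real \<Rightarrow> real)"
      by (auto simp: indicator_def fun_eq_iff)
    have fin: "emeasure lborel ({a..b} \<inter> S) < \<infinity>"
      by (rule le_less_trans[OF emeasure_mono[of _ "{a..b}"]]) (auto simp: emeasure_lborel_Icc_eq)
    show "set_integrable lborel {a..b} (indicator S :: real \<Rightarrow> real)"
    proof -
      have "integrable lborel (indicator ({a..b} \<inter> S) :: real \<Rightarrow> real)" using fin by auto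
      then show ?thesis unfolding set_integrable_def by (simp add: indicator_inter_arith[symmetric])
    qed
    show "(LINT x:{a..b}|lborel. (indicator S x :: real)) = max (b-t) 0 - max (a-t) 0"
      unfolding set_lebesgue_integral_def using hS[OF ab] by (simp add: indicator_inter_arith[symmetric])
  qed
  have i1: "integrable M (\<lambda>\<omega>. Z \<omega> * max (Z \<omega> - t) 0)"
    by (rule integrable_zmax[OF Zm iZ iZ2])
  have i2: "integrable M (\<lambda>\<omega>. indicator S (Zs \<omega>) :: real)"
    by (rule integrable_const_bound[where B=1]) auto
  have e2: "expectation (\<lambda>\<omega>. indicator S (Zs \<omega>)) = measure M {\<omega>\<in>space M. Zs \<omega> \<in> S}"
  proof -
    have "expectation (\<lambda>\<omega>. indicator S (Zs \<omega>)) = expectation (indicator {\<omega>\<in>space M. Zs \<omega> \<in> S})"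
      by (intro Bochner_Integration.integral_cong) (auto simp: indicator_def)
    also have "\<dots> = measure M {\<omega>\<in>space M. Zs \<omega> \<in> S}"
      by (simp add: Int_absorb2)
    finally show ?thesis .
  qed
  have "expectation (\<lambda>\<omega>. Z \<omega> * max (Z \<omega> - t) 0) = v * measure M {\<omega>\<in>space M. Zs \<omega> \<in> S}"
    using zbf[rule_format, OF ac i1 i2] e2 var by simp
  then show ?thesis using v by (simp add: field_simps)
qed

lemma tail_formula:
  fixes t v :: real and S :: "real set" and Z Zs :: "'a \<Rightarrow> real" and fZ :: "real \<Rightarrow> real"
  assumes P: "prob_space M" and zb: "zero_bias M Z Zs" and var: "prob_space.variance M Z = v"
    and v: "0 < v" and dist: "distributed M lborel Z (\<lambda>t. ennreal (fZ t))" and f0: "\<forall>s. 0 \<le> fZ s"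
    and iZ: "integrable M Z"
    and iZ2: "integrable M (\<lambda>\<omega>. (Z \<omega>)\<^sup>2)" and S: "S \<in> sets borel"
    and hS: "\<And>a b. a \<le> b \<Longrightarrow> measure lborel ({a..b} \<inter> S) = max (b-t) 0 - max (a-t) 0"
    and t: "0 \<le> t"
  shows "ennreal (measure M {\<omega>\<in>space M. Zs \<omega> \<in> S})
       = ennreal (1/v) * (\<integral>\<^sup>+ u. indicator {t..} u * hz fZ u \<partial>lborel)"
proof -
  interpret prob_space M by (rule P)
  have Zm[measurable]: "Z \<in> borel_measurable M"
    using distributed_measurable[OF dist] by simp
  have fm[measurable]: "fZ \<in> borel_measurable borel"
    using distributed_real_measurable[OF _ dist] f0 by simp
  define E where "E = expectation (\<lambda>\<omega>. Z \<omega> * max (Z \<omega> - t) 0)"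
  have nn: "0 \<le> z * max (z - t) 0" for z
    using t by (cases "z \<le> t") auto
  have i1: "integrable M (\<lambda>\<omega>. Z \<omega> * max (Z \<omega> - t) 0)"
    by (rule integrable_zmax[OF Zm iZ iZ2])
  have E0: "0 \<le> E" unfolding E_def by (intro integral_nonneg_AE) (simp add: nn)
  have "ennreal E = (\<integral>\<^sup>+ \<omega>. ennreal (Z \<omega> * max (Z \<omega> - t) 0) \<partial>M)"
    unfolding E_def by (rule nn_integral_eq_integral[symmetric, OF i1]) (simp add: nn)
  also have "\<dots> = (\<integral>\<^sup>+ s. ennreal (fZ s) * ennreal (s * max (s - t) 0) \<partial>lborel)"
    by (rule distributed_nn_integral[OF dist, symmetric]) simp
  also have "\<dots> = (\<integral>\<^sup>+ u. indicator {t..} u * hz fZ u \<partial>lborel)"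
    by (rule tonelli_tail[OF fm f0 t])
  finally have eE: "ennreal E = (\<integral>\<^sup>+ u. indicator {t..} u * hz fZ u \<partial>lborel)" .
  have "measure M {\<omega>\<in>space M. Zs \<omega> \<in> S} = E / v"
    unfolding E_def by (rule zb_tail[OF P zb var v Zm iZ iZ2 S hS])
  then have "ennreal (measure M {\<omega>\<in>space M. Zs \<omega> \<in> S}) = ennreal (1/v) * ennreal E"
    using v E0 by (simp add: ennreal_mult[symmetric])
  then show ?thesis using eE by simp
qed

lemma meas_ge: "a \<le> b \<Longrightarrow> measure lborel ({a..b} \<inter> {t..}) = max (b-t) 0 - max (a-t) (0::real)"
proof -
  assume ab: "a \<le> b"
  have "{a..b} \<inter> {t..} = {max a t..b}" by auto
  then show ?thesis using ab by (auto simp: max_def)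
qed

lemma meas_gt: "a \<le> b \<Longrightarrow> measure lborel ({a..b} \<inter> {t<..}) = max (b-t) 0 - max (a-t) (0::real)"
proof -
  assume ab: "a \<le> b"
  show ?thesis
  proof (cases "t < a")
    case True
    then have "{a..b} \<inter> {t<..} = {a..b}" by auto
    then show ?thesis using ab True by (auto simp: max_def)
  next
    case False
    then have "{a..b} \<inter> {t<..} = {t<..b}" by auto
    then show ?thesis using ab False by (auto simp: max_def)
  qed
qed

lemma hz_compare:
  fixes fX fY :: "real \<Rightarrow> real"
  assumes [measurable]: "fX \<in> borel_measurable borel" "fY \<in> borel_measurable borel"
    and fX0: "\<forall>t. 0 \<le> fX t" and fYp: "\<forall>t. x0 \<le> t \<longrightarrow> 0 < fY t"
    and mon: "\<forall>s t. x0 \<le> s \<longrightarrow> s \<le> t \<longrightarrow> fX t / fY t \<le> fX s / fY s"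
    and x0: "0 \<le> x0" and u: "x0 \<le> u"
  shows "hz fX u \<le> ennreal (fX u / fY u) * hz fY u"
proof -
  have "hz fX u \<le> (\<integral>\<^sup>+ s. ennreal (fX u / fY u) * (ennreal (s * fY s) * indicator {u..} s) \<partial>lborel)"
    unfolding hz_def
  proof (intro nn_integral_mono)
    fix s :: real
    show "ennreal (s * fX s) * indicator {u..} s \<le> ennreal (fX u / fY u) * (ennreal (s * fY s) * indicator {u..} s)"
    proof (cases "u \<le> s")
      case True
      have s0: "0 \<le> s" using True u x0 by simp
      have fYs: "0 < fY s" using fYp True u by simp
      have fYu: "0 < fY u" using fYp u by simp
      have r: "fX s / fY s \<le> fX u / fY u" using mon u True by blast
      have "fX s = fX s / fY s * fY s" using fYs by simp
      also have "\<dots> \<le> fX u / fY u * fY s" using r fYs by (intro mult_right_mono) auto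
      finally have "s * fX s \<le> s * (fX u / fY u * fY s)" using s0 by (intro mult_left_mono) auto
      then have "ennreal (s * fX s) \<le> ennreal (fX u / fY u * (s * fY s))"
        by (intro ennreal_leI) (simp add: algebra_simps)
      also have "\<dots> = ennreal (fX u / fY u) * ennreal (s * fY s)"
        using fX0 fYu by (intro ennreal_mult') simp
      finally show ?thesis using True by simp
    next
      case False
      then show ?thesis by simp
    qed
  qed
  also have "\<dots> = ennreal (fX u / fY u) * hz fY u"
    unfolding hz_def by (rule nn_integral_cmult) measurable
  finally show ?thesis .
qed

lemma density_tail_unique:
  fixes Ys :: "'a \<Rightarrow> real" and fYs fY :: "real \<Rightarrow> real" and c :: ennreal
  assumes P: "prob_space M" and dist: "distributed M lborel Ys (\<lambda>t. ennreal (fYs t))"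
    and f0: "\<forall>t. 0 \<le> fYs t" and fYm[measurable]: "fY \<in> borel_measurable borel"
    and tailY: "\<And>b. x0 \<le> b \<Longrightarrow> ennreal (measure M {\<omega>\<in>space M. Ys \<omega> \<in> {b<..}})
         = c * (\<integral>\<^sup>+ u. indicator {b..} u * hz fY u \<partial>lborel)"
  shows "AE u in lborel. x0 \<le> u \<longrightarrow> ennreal (fYs u) = c * hz fY u"
proof -
  interpret prob_space M by (rule P)
  have fsm[measurable]: "fYs \<in> borel_measurable borel"
    using distributed_real_measurable[OF _ dist] f0 by simp
  have Ysm[measurable]: "Ys \<in> borel_measurable M"
    using distributed_measurable[OF dist] by simp
  define f1 where "f1 u = indicator {x0..} u * ennreal (fYs u)" for u
  define f2 where "f2 u = indicator {x0..} u * (c * hz fY u)" for u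
  have f1m[measurable]: "f1 \<in> borel_measurable borel" unfolding f1_def by measurable
  have f2m[measurable]: "f2 \<in> borel_measurable borel" unfolding f2_def by measurable
  have key: "(\<integral>\<^sup>+ u. f1 u * indicator {b<..} u \<partial>lborel) = (\<integral>\<^sup>+ u. f2 u * indicator {b<..} u \<partial>lborel)"
    if b: "x0 \<le> b" for b
  proof -
    have "(\<integral>\<^sup>+ u. f1 u * indicator {b<..} u \<partial>lborel) = (\<integral>\<^sup>+ u. ennreal (fYs u) * indicator {b<..} u \<partial>lborel)"
      using b by (intro nn_integral_cong) (auto simp: f1_def indicator_def)
    also have "\<dots> = emeasure M (Ys -` {b<..} \<inter> space M)"
      by (rule distributed_emeasure[OF dist, symmetric]) simp
    also have "\<dots> = ennreal (measure M {\<omega>\<in>space M. Ys \<omega> \<in> {b<..}})"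
      by (simp add: emeasure_eq_measure vimage_def Int_def conj_commute)
    also have "\<dots> = c * (\<integral>\<^sup>+ u. indicator {b..} u * hz fY u \<partial>lborel)"
      by (rule tailY[OF b])
    also have "\<dots> = (\<integral>\<^sup>+ u. c * (indicator {b..} u * hz fY u) \<partial>lborel)"
      by (rule nn_integral_cmult[symmetric]) measurable
    also have "\<dots> = (\<integral>\<^sup>+ u. f2 u * indicator {b<..} u \<partial>lborel)"
      using b by (intro nn_integral_cong_AE, use AE_lborel_singleton[of b] in eventually_elim)
        (auto simp: f2_def indicator_def)
    finally show ?thesis .
  qed
  have shift: "(\<integral>\<^sup>+ u. (indicator {x0..} u * g u) * indicator {a<..} u \<partial>lborel)
      = (\<integral>\<^sup>+ u. (indicator {x0..} u * g u) * indicator {max a x0<..} u \<partial>lborel)" for a and g :: "real \<Rightarrow> ennreal"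
    by (intro nn_integral_cong_AE, use AE_lborel_singleton[of x0] in eventually_elim)
      (auto simp: indicator_def max_def)
  have eqE: "emeasure (density lborel f1) {a<..} = emeasure (density lborel f2) {a<..}" for a
  proof -
    have "emeasure (density lborel f1) {a<..} = (\<integral>\<^sup>+ u. f1 u * indicator {a<..} u \<partial>lborel)"
      by (simp add: emeasure_density)
    also have "\<dots> = (\<integral>\<^sup>+ u. f1 u * indicator {max a x0<..} u \<partial>lborel)"
      unfolding f1_def by (rule shift)
    also have "\<dots> = (\<integral>\<^sup>+ u. f2 u * indicator {max a x0<..} u \<partial>lborel)"
      by (rule key) simp
    also have "\<dots> = (\<integral>\<^sup>+ u. f2 u * indicator {a<..} u \<partial>lborel)"
      unfolding f2_def by (rule shift[symmetric])
    also have "\<dots> = emeasure (density lborel f2) {a<..}"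
      by (simp add: emeasure_density)
    finally show ?thesis .
  qed
  have fin: "emeasure (density lborel f1) A \<noteq> \<infinity>" for A
  proof -
    have "emeasure (density lborel f1) A \<le> emeasure (density lborel f1) UNIV"
      by (rule emeasure_mono) auto
    also have "\<dots> = (\<integral>\<^sup>+ u. f1 u \<partial>lborel)"
      by (simp add: emeasure_density)
    also have "\<dots> \<le> (\<integral>\<^sup>+ u. ennreal (fYs u) * indicator UNIV u \<partial>lborel)"
      by (intro nn_integral_mono) (auto simp: f1_def indicator_def)
    also have "\<dots> = emeasure M (Ys -` UNIV \<inter> space M)"
      by (rule distributed_emeasure[OF dist, symmetric]) simp
    also have "\<dots> \<le> 1" by (simp add: emeasure_space_1)
    finally show ?thesis by (auto simp: top_unique)
  qed
  have sets_eq: "sets (density lborel f) = sigma_sets UNIV (range greaterThan)" for f :: "real \<Rightarrow> ennreal"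
  proof -
    have g: "(\<lambda>a::real. {x. eucl_less a x}) = greaterThan"
      by (auto simp: eucl_less_def fun_eq_iff)
    have "sets (borel :: real measure) = sigma_sets UNIV (range greaterThan)"
      by (subst borel_eq_greaterThan[where 'a=real, unfolded g]) (rule sets_measure_of, simp)
    then show ?thesis by simp
  qed
  have "density lborel f1 = density lborel f2"
  proof (rule measure_eqI_generator_eq[where E="range greaterThan" and \<Omega>=UNIV and A="\<lambda>i. {- real i<..}"])
    show "Int_stable (range greaterThan :: real set set)"
    proof (rule Int_stableI)
      fix a b :: "real set" assume "a \<in> range greaterThan" "b \<in> range greaterThan"
      then obtain x y :: real where "a = {x<..}" "b = {y<..}" by auto
      then have "a \<inter> b = {max x y<..}" by auto
      then show "a \<inter> b \<in> range greaterThan" by auto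
    qed
    show "(\<Union>i. {- real i<..}) = (UNIV :: real set)"
    proof (safe)
      fix x :: real
      obtain n :: nat where "- x < real n" using reals_Archimedean2 by blast
      then show "x \<in> (\<Union>i. {- real i<..})" by (auto intro!: exI[of _ n])
    qed simp
    show "range (\<lambda>i. {- real i<..}) \<subseteq> range greaterThan" by auto
    show "range greaterThan \<subseteq> Pow (UNIV :: real set)" by auto
    show "sets (density lborel f1) = sigma_sets UNIV (range greaterThan)" by (rule sets_eq)
    show "sets (density lborel f2) = sigma_sets UNIV (range greaterThan)" by (rule sets_eq)
    show "emeasure (density lborel f1) X = emeasure (density lborel f2) X" if "X \<in> range greaterThan" for X
      using that eqE by auto
    show "emeasure (density lborel f1) {- real i<..} \<noteq> \<infinity>" for i by (rule fin)
  qed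
  note deq = this
  have "AE u in lborel. f1 u = f2 u"
    by (rule sigma_finite_measure.density_unique[OF sigma_finite_lborel _ _ deq]) (simp_all only: measurable_lborel2 f1m f2m)
  then show ?thesis
    by eventually_elim (auto simp: f1_def f2_def)
qed

theorem proposition2p2:
  fixes M :: "'a measure" and X Y Xs Ys :: "'a \<Rightarrow> real"
    and fX fY fYs aY :: "real \<Rightarrow> real" and \<sigma> x0 :: real
  assumes "prob_space M"
    and "\<forall>t. 0 \<le> fX t" and "\<forall>t. 0 \<le> fY t" and "\<forall>t. 0 \<le> fYs t"
    and "distributed M lborel X (\<lambda>t. ennreal (fX t))"
    and "distributed M lborel Y (\<lambda>t. ennreal (fY t))"
    and "integrable M X" and "integrable M Y"
    and "integrable M (\<lambda>\<omega>. (X \<omega>)\<^sup>2)" and "integrable M (\<lambda>\<omega>. (Y \<omega>)\<^sup>2)"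
    and "prob_space.expectation M X = 0" and "prob_space.expectation M Y = 0"
    and "0 < \<sigma>\<^sup>2"
    and "prob_space.variance M X = \<sigma>\<^sup>2" and "prob_space.variance M Y = \<sigma>\<^sup>2"
    and "zero_bias M X Xs" and "zero_bias M Y Ys"
    and "distributed M lborel Ys (\<lambda>t. ennreal (fYs t))"
    and "0 \<le> x0"
    and "\<forall>t. x0 \<le> t \<longrightarrow> 0 < fY t"
    and "\<forall>s t. x0 \<le> s \<longrightarrow> s \<le> t \<longrightarrow> fX t / fY t \<le> fX s / fY s"
    and "\<forall>x. x0 \<le> x \<longrightarrow> (\<forall>t. x \<le> t \<longrightarrow> fYs t / fY t \<le> aY x)"
  shows "\<forall>x. x0 \<le> x \<longrightarrow>
           measure M {\<omega> \<in> space M. x \<le> Xs \<omega>} \<le> aY x * measure M {\<omega> \<in> space M. x \<le> X \<omega>}"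
proof (intro allI impI)
  note A = assms
  fix x assume x: "x0 \<le> x"
  interpret prob_space M by (rule A(1))
  have x0: "0 \<le> x0" by (rule A(19))
  have xnn: "0 \<le> x" using x x0 by simp
  have fXm[measurable]: "fX \<in> borel_measurable borel"
    using distributed_real_measurable[OF _ A(5)] A(2) by simp
  have fYm[measurable]: "fY \<in> borel_measurable borel"
    using distributed_real_measurable[OF _ A(6)] A(3) by simp
  have Xm[measurable]: "X \<in> borel_measurable M"
    using distributed_measurable[OF A(5)] by simp
  define c where "c = ennreal (1 / \<sigma>\<^sup>2)"
  have tailX: "ennreal (measure M {\<omega>\<in>space M. Xs \<omega> \<in> {x..}})
       = c * (\<integral>\<^sup>+ u. indicator {x..} u * hz fX u \<partial>lborel)"
    unfolding c_def
    by (rule tail_formula[OF A(1) A(16) A(14) A(13) A(5) A(2) A(7) A(9) _ meas_ge xnn]) auto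
  have tailY: "ennreal (measure M {\<omega>\<in>space M. Ys \<omega> \<in> {b<..}})
       = c * (\<integral>\<^sup>+ u. indicator {b..} u * hz fY u \<partial>lborel)" if b: "x0 \<le> b" for b
    unfolding c_def
    by (rule tail_formula[OF A(1) A(17) A(15) A(13) A(6) A(3) A(8) A(10) _ meas_gt]) (use b x0 in auto)
  have AEY: "AE u in lborel. x0 \<le> u \<longrightarrow> ennreal (fYs u) = c * hz fY u"
    by (rule density_tail_unique[OF A(1) A(18) A(4) fYm tailY])
  have aY0: "0 \<le> aY x"
  proof -
    have "fYs x / fY x \<le> aY x" using A(22) x by blast
    moreover have "0 \<le> fYs x / fY x" using A(4) A(20) x by (simp add: less_imp_le)
    ultimately show ?thesis by simp
  qed
  have AEle: "AE u in lborel. indicator {x..} u * (c * hz fX u) \<le> indicator {x..} u * ennreal (aY x * fX u)"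
    using AEY
  proof eventually_elim
    case (elim u)
    show ?case
    proof (cases "x \<le> u")
      case True
      have u0: "x0 \<le> u" using True x by simp
      have fYu: "0 < fY u" using A(20) u0 by simp
      have eqY: "ennreal (fYs u) = c * hz fY u" using elim u0 by simp
      have r0: "0 \<le> fX u / fY u" using A(2) fYu by simp
      have "c * hz fX u \<le> c * (ennreal (fX u / fY u) * hz fY u)"
        by (intro mult_left_mono hz_compare[OF fXm fYm A(2) A(20) A(21) x0 u0]) simp
      also have "\<dots> = ennreal (fX u / fY u) * ennreal (fYs u)"
        using eqY by (simp add: mult_ac)
      also have "\<dots> = ennreal (fX u / fY u * fYs u)"
        using r0 by (rule ennreal_mult'[symmetric])
      also have "\<dots> \<le> ennreal (aY x * fX u)"
      proof (intro ennreal_leI)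
        have "fYs u / fY u \<le> aY x" using A(22) x True by blast
        then have "fYs u \<le> aY x * fY u" using fYu by (simp add: divide_le_eq)
        then have "fX u / fY u * fYs u \<le> fX u / fY u * (aY x * fY u)"
          using r0 by (intro mult_left_mono) auto
        also have "\<dots> = aY x * fX u" using fYu by simp
        finally show "fX u / fY u * fYs u \<le> aY x * fX u" .
      qed
      finally show ?thesis using True by simp
    next
      case False
      then show ?thesis by simp
    qed
  qed
  have "ennreal (measure M {\<omega>\<in>space M. x \<le> Xs \<omega>}) = c * (\<integral>\<^sup>+ u. indicator {x..} u * hz fX u \<partial>lborel)"
    using tailX by simp
  also have "\<dots> = (\<integral>\<^sup>+ u. indicator {x..} u * (c * hz fX u) \<partial>lborel)"
    by (subst nn_integral_cmult[symmetric]) (measurable, simp add: mult_ac)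
  also have "\<dots> \<le> (\<integral>\<^sup>+ u. indicator {x..} u * ennreal (aY x * fX u) \<partial>lborel)"
    by (rule nn_integral_mono_AE[OF AEle])
  also have "\<dots> = (\<integral>\<^sup>+ u. ennreal (aY x) * (ennreal (fX u) * indicator {x..} u) \<partial>lborel)"
    using aY0 A(2) by (intro nn_integral_cong) (simp add: ennreal_mult mult_ac)
  also have "\<dots> = ennreal (aY x) * (\<integral>\<^sup>+ u. ennreal (fX u) * indicator {x..} u \<partial>lborel)"
    by (rule nn_integral_cmult) measurable
  also have "(\<integral>\<^sup>+ u. ennreal (fX u) * indicator {x..} u \<partial>lborel) = emeasure M (X -` {x..} \<inter> space M)"
    by (rule distributed_emeasure[OF A(5), symmetric]) simp
  also have "\<dots> = ennreal (measure M {\<omega>\<in>space M. x \<le> X \<omega>})"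
    by (simp add: emeasure_eq_measure vimage_def Int_def conj_commute)
  also have "ennreal (aY x) * \<dots> = ennreal (aY x * measure M {\<omega>\<in>space M. x \<le> X \<omega>})"
    using aY0 by (simp add: ennreal_mult)
  finally show "measure M {\<omega> \<in> space M. x \<le> Xs \<omega>} \<le> aY x * measure M {\<omega> \<in> space M. x \<le> X \<omega>}"
    using aY0 by (simp add: ennreal_le_iff)
qed

end
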